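(* Let $\mathcal H$ be a well-structured preconditioner set, $f:\mathbb R^d\to\mathbb R$ differentiable, and $\{f_t\}_{t\in\mathcal T}$ random differentiable functions with $\mathbb E[\nabla f_t(x)]=\nabla f(x)$ for all $t,x$. If there is $\Sigma\in\mathcal S_+^d$ with $\mathbb E[(\nabla f(x)-\nabla f_t(x))(\nabla f(x)-\nabla f_t(x))^\top]\preceq\Sigma$ for all $x\in\mathbb R^d$ and $t\in\mathcal T$, then $\sigma_{\mathcal H}(\{f_t\}_{t\in\mathcal T})\le\operatorname{Tr}(P_{\mathcal H}(\Sigma))$.
   Context: $\mathcal S^d_+$ (resp. $\mathcal S^d_{++}$) denotes the set of real symmetric positive semidefinite (resp. positive definite) $d\times d$ matrices; $\langle A,B\rangle=\operatorname{Tr}(A^\top B)$. A set $\mathcal H\subseteq\mathcal S_+^d$ is a well-structured preconditioner set if $\mathcal H=\mathcal S_+^d\cap\mathcal K$ for some set $\mathcal K$ of real $d\times d$ matrices that is closed under scalar multiplication, matrix addition and matrix multiplication and contains the identity $I_d$. For $M\in\mathcal S^d_{++}$, $P_{\mathcal H}(M):=\arg\min_{H\in\mathcal H\cap\mathcal S^d_{++}}\langle M,H^{-1}\rangle+\operatorname{Tr}(H)$ (the minimizer exists and is unique); for singular $M\in\mathcal S^d_+$, $P_{\mathcal H}(M):=\lim_{\delta\downarrow0}P_{\mathcal H}(M+\delta I_d)$. Adaptive gradient variance: $\sigma_{\mathcal H}(\{f_t\})^2:=\inf_{H\in\mathcal H\cap\mathcal S^d_{++},\operatorname{Tr}(H)\le1}\sup_{t,x}\mathbb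 E\|\nabla f_t(x)-\mathbb E[\nabla f_t(x)]\|_{H^{-1}}^2$, where $\|v\|_{H^{-1}}=\sqrt{v^\top H^{-1}v}$. *)

theory Defs
  imports "HOL-Probability.Probability"
begin

text \<open>Matrices are d x d real matrices represented as real^'n^'n (d = CARD('n)).\<close>

definition psd :: "real^'n^'n \<Rightarrow> bool" where
  "psd A \<longleftrightarrow> transpose A = A \<and> (\<forall>v. 0 \<le> v \<bullet> (A *v v))"

definition pd :: "real^'n^'n \<Rightarrow> bool" where
  "pd A \<longleftrightarrow> transpose A = A \<and> (\<forall>v. v \<noteq> 0 \<longrightarrow> 0 < v \<bullet> (A *v v))"

definition loewner_le :: "real^'n^'n \<Rightarrow> real^'n^'n \<Rightarrow> bool" where
  "loewner_le A B \<longleftrightarrow> psd (B - A)"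

definition frob :: "real^'n^'n \<Rightarrow> real^'n^'n \<Rightarrow> real" where
  "frob A B = trace (transpose A ** B)"

definition outer :: "real^'n \<Rightarrow> real^'n \<Rightarrow> real^'n^'n" where
  "outer v w = (\<chi> i j. v $ i * w $ j)"

definition well_structured :: "(real^'n^'n) set \<Rightarrow> bool" where
  "well_structured Hs \<longleftrightarrow>
     (\<exists>K :: (real^'n^'n) set.
        (\<forall>c A. A \<in> K \<longrightarrow> c *\<^sub>R A \<in> K) \<and>
        (\<forall>A B. A \<in> K \<longrightarrow> B \<in> K \<longrightarrow> A + B \<in> K) \<and>
        (\<forall>A B. A \<in> K \<longrightarrow> B \<in> K \<longrightarrow> A ** B \<in> K) \<and>
        mat 1 \<in> K \<and>
        Hs = {A. psd A} \<inter> K)"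

definition precond_pd :: "(real^'n^'n) set \<Rightarrow> real^'n^'n \<Rightarrow> real^'n^'n" where
  "precond_pd Hs M = (THE H. H \<in> Hs \<and> pd H \<and>
      (\<forall>H'\<in>Hs. pd H' \<longrightarrow>
         frob M (matrix_inv H) + trace H \<le> frob M (matrix_inv H') + trace H'))"

definition precond :: "(real^'n^'n) set \<Rightarrow> real^'n^'n \<Rightarrow> real^'n^'n" where
  "precond Hs M = (if pd M then precond_pd Hs M
     else Lim (at_right (0::real)) (\<lambda>\<delta>. precond_pd Hs (M + \<delta> *\<^sub>R mat 1)))"

definition grad :: "(real^'n \<Rightarrow> real) \<Rightarrow> real^'n \<Rightarrow> real^'n" where
  "grad f x = (THE g. (f has_derivative (\<lambda>h. g \<bullet> h)) (at x))"

text \<open>Squared adaptive gradient variance sigma_H({f_t})^2 of the random functions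
  F t \<omega> (t \<in> index type, \<omega> drawn from probability space M), valued in [0,\<infinity>].\<close>
definition adaptive_var_sq ::
  "(real^'n^'n) set \<Rightarrow> 'w measure \<Rightarrow> ('t \<Rightarrow> 'w \<Rightarrow> real^'n \<Rightarrow> real) \<Rightarrow> ennreal" where
  "adaptive_var_sq Hs M F =
     (INF H \<in> {H \<in> Hs. pd H \<and> trace H \<le> 1}.
        SUP t. SUP x.
          (\<integral>\<^sup>+ \<omega>. ennreal
             (let v = grad (F t \<omega>) x
                      - (\<integral>\<omega>'. grad (F t \<omega>') x \<partial>M)
              in v \<bullet> (matrix_inv H *v v)) \<partial>M))"

definition adaptive_std ::
  "(real^'n^'n) set \<Rightarrow> 'w measure \<Rightarrow> ('t \<Rightarrow> 'w \<Rightarrow> real^'n \<Rightarrow> real) \<Rightarrow> ennreal" where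
  "adaptive_std Hs M F =
     (let s = adaptive_var_sq Hs M F in
      if s = \<infinity> then \<infinity> else ennreal (sqrt (enn2real s)))"

end

theory Submission
  imports Defs
begin

lemma outer_mult_vec: "outer u w *v x = (w \<bullet> x) *\<^sub>R u"
  by (simp add: outer_def vec_eq_iff matrix_vector_mult_def inner_vec_def sum_distrib_left mult_ac)

lemma transpose_outer: "transpose (outer u w) = outer w u"
  by (simp add: outer_def transpose_def vec_eq_iff)

lemma trace_outer: "trace (outer u w) = u \<bullet> w"
  by (simp add: outer_def trace_def inner_vec_def)

lemma frob_inner: "frob A B = A \<bullet> B"
  unfolding frob_def trace_def inner_vec_def matrix_matrix_mult_def transpose_def
  by (simp, subst sum.swap, simp)

lemma inner_outer: "G \<bullet> outer v w = v \<bullet> (G *v w)"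
  unfolding outer_def inner_vec_def matrix_vector_mult_def
  by (simp add: sum_distrib_left mult_ac)

lemma trace_mult_inner: "trace ((A::real^'n^'n) ** B) = transpose A \<bullet> B"
proof -
  have "frob (transpose A) B = transpose A \<bullet> B" by (rule frob_inner)
  then show ?thesis by (simp add: frob_def)
qed

lemma sym_inner: "transpose A = A \<Longrightarrow> x \<bullet> (A *v y) = (A *v x) \<bullet> (y::real^'n)"
proof -
  assume a: "transpose A = A"
  have "x \<bullet> (A *v y) = (x v* A) \<bullet> y" by (rule dot_lmul_matrix[symmetric])
  also have "x v* A = transpose A *v x" by simp
  finally show ?thesis using a by simp
qed

lemma sum_mult_vec: "(sum f S) *v (x::real^'n) = (\<Sum>u\<in>S. f u *v x)"
  by (induction S rule: infinite_finite_induct) (simp_all add: matrix_vector_mult_add_rdistrib)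

lemma scaleR_mult_vec: "(c *\<^sub>R A) *v (x::real^'n) = c *\<^sub>R (A *v x)"
  by (simp add: scaleR_matrix_vector_assoc)

lemma transpose_sum: "transpose (sum f S) = (\<Sum>u\<in>S. transpose (f u))"
  by (simp add: transpose_def vec_eq_iff)

lemma transpose_add: "transpose (A + B) = transpose A + transpose B"
  by (simp add: transpose_def vec_eq_iff)

lemma transpose_diff: "transpose (A - B) = transpose A - transpose B"
  by (simp add: transpose_def vec_eq_iff)

lemma trace_sum: "trace (sum f S) = (\<Sum>u\<in>S. trace (f u))"
  unfolding trace_def by (simp, subst sum.swap, simp)

lemma trace_scaleR: "trace (c *\<^sub>R A) = c * trace (A::real^'n^'n)"
  by (simp add: trace_def sum_distrib_left)

lemma matrix_sub_ldistrib: "(A::real^'n^'n) ** (B - C) = A ** B - A ** C"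
  by (simp add: matrix_matrix_mult_def vec_eq_iff sum_subtractf right_diff_distrib)

lemma matrix_sub_rdistrib: "((B::real^'n^'n) - C) ** A = B ** A - C ** A"
  by (simp add: matrix_matrix_mult_def vec_eq_iff sum_subtractf left_diff_distrib)

lemma matrix_inv_eq:
  fixes A :: "real^'n^'n"
  assumes "A ** X = mat 1" "X ** A = mat 1"
  shows "matrix_inv A = X"
proof -
  have ex: "\<exists>X'. A ** X' = mat 1 \<and> X' ** A = mat 1" using assms by blast
  have "A ** matrix_inv A = mat 1 \<and> matrix_inv A ** A = mat 1"
    unfolding matrix_inv_def by (rule someI_ex[OF ex])
  then have "matrix_inv A = matrix_inv A ** (A ** X)" using assms by simp
  also have "\<dots> = X" using \<open>A ** matrix_inv A = mat 1 \<and> matrix_inv A ** A = mat 1\<close>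
    by (simp add: matrix_mul_assoc)
  finally show ?thesis .
qed



definition onb :: "(real^'n) set \<Rightarrow> bool" where
  "onb B \<longleftrightarrow> finite B \<and> (\<forall>u\<in>B. \<forall>w\<in>B. u \<bullet> w = (if u = w then 1 else 0)) \<and> span B = UNIV"

definition specsum :: "(real^'n) set \<Rightarrow> (real^'n \<Rightarrow> real) \<Rightarrow> real^'n^'n" where
  "specsum B g = (\<Sum>u\<in>B. g u *\<^sub>R outer u u)"

lemma mult_vec_sum: "(A::real^'n^'n) *v (sum f S) = (\<Sum>u\<in>S. A *v f u)"
  by (induction S rule: infinite_finite_induct) (simp_all add: matrix_vector_right_distrib)

lemma onb_expand:
  assumes "onb B" shows "(\<Sum>u\<in>B. (u \<bullet> x) *\<^sub>R u) = x"
proof -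
  have fin: "finite B" and o: "\<And>u w. u\<in>B \<Longrightarrow> w\<in>B \<Longrightarrow> u \<bullet> w = (if u = w then 1 else 0)"
    and sp: "span B = UNIV" using assms by (auto simp: onb_def)
  have po: "pairwise orthogonal B" using o by (auto simp: pairwise_def orthogonal_def)
  have n1: "\<And>i. i \<in> B \<Longrightarrow> norm i = 1" using o by (simp add: norm_eq_1)
  have "(\<Sum>i\<in>B. (x \<bullet> i) *\<^sub>R i) = x"
    by (rule orthonormal_basis_expand[OF po n1]) (auto simp: sp fin)
  then show ?thesis by (simp add: inner_commute)
qed

lemma onb_inner_sum:
  assumes "onb B" "u \<in> B" shows "u \<bullet> (\<Sum>w\<in>B. c w *\<^sub>R w) = c u"
proof -
  have fin: "finite B" and o: "\<And>w. w\<in>B \<Longrightarrow> u \<bullet> w = (if u = w then 1 else 0)"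
    using assms by (auto simp: onb_def)
  have "u \<bullet> (\<Sum>w\<in>B. c w *\<^sub>R w) = (\<Sum>w\<in>B. c w * (u \<bullet> w))"
    by (simp add: inner_sum_right)
  also have "\<dots> = (\<Sum>w\<in>B. if u = w then c w else 0)"
    by (rule sum.cong) (auto simp: o)
  also have "\<dots> = c u" using fin assms(2) by simp
  finally show ?thesis .
qed

lemma specsum_vec: "specsum B g *v x = (\<Sum>u\<in>B. (g u * (u \<bullet> x)) *\<^sub>R u)"
  unfolding specsum_def sum_mult_vec scaleR_mult_vec outer_mult_vec by simp

lemma specsum_mult:
  assumes "onb B" shows "specsum B g ** specsum B h = specsum B (\<lambda>u. g u * h u)"
proof (subst matrix_eq, intro allI)
  fix x
  have "(specsum B g ** specsum B h) *v x = specsum B g *v (specsum B h *v x)"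
    by (simp add: matrix_vector_mul_assoc)
  also have "\<dots> = (\<Sum>u\<in>B. (g u * (u \<bullet> (\<Sum>w\<in>B. (h w * (w \<bullet> x)) *\<^sub>R w))) *\<^sub>R u)"
    by (simp add: specsum_vec)
  also have "\<dots> = (\<Sum>u\<in>B. (g u * (h u * (u \<bullet> x))) *\<^sub>R u)"
    by (rule sum.cong) (auto simp: onb_inner_sum[OF assms])
  also have "\<dots> = specsum B (\<lambda>u. g u * h u) *v x"
    by (simp add: specsum_vec mult.assoc)
  finally show "(specsum B g ** specsum B h) *v x = specsum B (\<lambda>u. g u * h u) *v x" .
qed

lemma specsum_one:
  assumes "onb B" shows "specsum B (\<lambda>_. 1) = mat 1"
  by (subst matrix_eq) (simp add: specsum_vec onb_expand[OF assms])

lemma specsum_add: "specsum B (\<lambda>u. g u + h u) = specsum B g + specsum B h"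
  by (simp add: specsum_def scaleR_add_left sum.distrib)

lemma specsum_diff: "specsum B (\<lambda>u. g u - h u) = specsum B g - specsum B h"
  by (simp add: specsum_def scaleR_diff_left sum_subtractf)

lemma specsum_scale: "specsum B (\<lambda>u. c * g u) = c *\<^sub>R specsum B g"
  by (simp add: specsum_def scaleR_sum_right)

lemma specsum_const:
  assumes "onb B" shows "specsum B (\<lambda>_. c) = c *\<^sub>R mat 1"
  using specsum_scale[of B c "\<lambda>_. 1"] specsum_one[OF assms] by simp

lemma specsum_transpose: "transpose (specsum B g) = specsum B g"
  by (simp add: specsum_def transpose_sum transpose_scalar transpose_outer)

lemma specsum_quad: "v \<bullet> (specsum B g *v v) = (\<Sum>u\<in>B. g u * (u \<bullet> v)^2)"
  by (simp add: specsum_vec inner_sum_right power2_eq_square inner_commute mult_ac)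

lemma trace_specsum_mult: "trace (specsum B g ** N) = (\<Sum>u\<in>B. g u * (u \<bullet> (N *v u)))"
proof -
  have "trace (specsum B g ** N) = specsum B g \<bullet> N"
    by (simp add: trace_mult_inner specsum_transpose)
  also have "\<dots> = (\<Sum>u\<in>B. g u * (outer u u \<bullet> N))"
    by (simp add: specsum_def inner_sum_left)
  also have "\<dots> = (\<Sum>u\<in>B. g u * (N \<bullet> outer u u))"
    by (rule sum.cong) (simp_all add: inner_commute[of "outer _ _" N])
  finally show ?thesis by (simp add: inner_outer)
qed

lemma trace_specsum:
  assumes "onb B" shows "trace (specsum B g) = (\<Sum>u\<in>B. g u)"
proof -
  have "trace (specsum B g) = (\<Sum>u\<in>B. g u * (u \<bullet> u))"
    by (simp add: specsum_def trace_sum trace_scaleR trace_outer)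
  also have "\<dots> = (\<Sum>u\<in>B. g u)"
    using assms by (intro sum.cong) (auto simp: onb_def)
  finally show ?thesis .
qed

lemma onb_nonzero_coeff:
  assumes "onb B" "v \<noteq> 0" shows "\<exists>u\<in>B. u \<bullet> v \<noteq> 0"
proof (rule ccontr)
  assume "\<not> ?thesis"
  then have "(\<Sum>u\<in>B. (u \<bullet> v) *\<^sub>R u) = 0" by simp
  with onb_expand[OF assms(1)] assms(2) show False by simp
qed

lemma onb_eq0:
  fixes D :: "real^'n^'n"
  assumes "onb B" "\<And>u. u \<in> B \<Longrightarrow> D *v u = 0" shows "D = 0"
proof (subst matrix_eq, intro allI)
  fix x
  have "D *v x = D *v (\<Sum>u\<in>B. (u \<bullet> x) *\<^sub>R u)" by (simp add: onb_expand[OF assms(1)])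
  also have "\<dots> = 0" by (simp add: mult_vec_sum matrix_vector_mult_scaleR assms(2))
  finally show "D *v x = 0 *v x" by simp
qed

lemma quad_zero:
  fixes a b :: real
  assumes "\<And>t. a * t + b * t^2 \<le> 0" shows "a = 0"
proof (rule ccontr)
  assume a0: "a \<noteq> 0"
  define c where "c = \<bar>b\<bar> + 1"
  have c0: "c > 0" by (simp add: c_def)
  define t where "t = a / c"
  have "- (\<bar>b\<bar> * t^2) \<le> b * t^2" using mult_right_mono[of "-\<bar>b\<bar>" b "t^2"] by simp
  then have "a * t + b * t^2 \<ge> a * t - \<bar>b\<bar> * t^2" by simp
  also have "a * t - \<bar>b\<bar> * t^2 = (a^2 / c^2) * (c - \<bar>b\<bar>)"
    using c0 unfolding t_def by (simp add: field_simps power2_eq_square)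
  also have "c - \<bar>b\<bar> = 1" by (simp add: c_def)
  finally have "a * t + b * t^2 \<ge> a^2 / c^2" by simp
  moreover have "a^2 / c^2 > 0" using a0 c0 by simp
  ultimately show False using assms[of t] by linarith
qed



lemma spectral_sub:
  fixes A :: "real^'n^'n"
  assumes sym: "transpose A = A"
  shows "subspace V \<Longrightarrow> (\<forall>x\<in>V. A *v x \<in> V) \<Longrightarrow>
    \<exists>B. B \<subseteq> V \<and> finite B \<and> (\<forall>u\<in>B. \<forall>w\<in>B. u \<bullet> w = (if u = w then 1 else 0)) \<and>
        span B = V \<and> (\<forall>u\<in>B. A *v u = (u \<bullet> (A *v u)) *\<^sub>R u)"
proof (induction "dim V" arbitrary: V rule: less_induct)
  case less
  note sV = less.prems(1) and inv = less.prems(2)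
  show ?case
  proof (cases "V = {0}")
    case True
    then show ?thesis by (intro exI[of _ "{}"]) auto
  next
    case False
    then obtain x0 where x0: "x0 \<in> V" "x0 \<noteq> 0" using sV subspace_0 by blast
    let ?S = "sphere 0 1 \<inter> V"
    have cS: "compact ?S"
      by (intro compact_Int_closed compact_sphere closed_subspace sV)
    have x0S: "x0 /\<^sub>R norm x0 \<in> ?S" using x0 sV by (simp add: subspace_scale)
    have cont: "continuous_on ?S (\<lambda>x. x \<bullet> (A *v x))"
      by (intro continuous_intros linear_continuous_on linear_conv_bounded_linear[THEN iffD1]
          matrix_vector_mul_linear)
    obtain v where vS: "v \<in> ?S" and vmax: "\<And>y. y \<in> ?S \<Longrightarrow> y \<bullet> (A *v y) \<le> v \<bullet> (A *v v)"
      using continuous_attains_sup[OF cS _ cont] x0S by blast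
    define lam where "lam = v \<bullet> (A *v v)"
    have vV: "v \<in> V" and nv: "v \<bullet> v = 1" using vS by (auto simp: norm_eq_1)
    have bound: "u \<bullet> (A *v u) \<le> lam * (u \<bullet> u)" if uV: "u \<in> V" for u
    proof (cases "u = 0")
      case True then show ?thesis by simp
    next
      case False
      define w where "w = u /\<^sub>R norm u"
      have "w \<in> ?S" using False uV sV by (simp add: w_def subspace_scale)
      then have "w \<bullet> (A *v w) \<le> lam" using vmax lam_def by blast
      moreover have "w \<bullet> (A *v w) = (u \<bullet> (A *v u)) / (norm u)^2"
        by (simp add: w_def matrix_vector_mult_scaleR power2_eq_square divide_inverse mult_ac)
      ultimately have "u \<bullet> (A *v u) \<le> lam * (norm u)^2"
        using False by (simp add: divide_le_eq)
      then show ?thesis by (simp add: power2_norm_eq_inner)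
    qed
    have orth: "w \<bullet> (A *v v - lam *\<^sub>R v) = 0" if wV: "w \<in> V" for w
    proof -
      have "(w \<bullet> (A *v v) - lam * (v \<bullet> w)) * (2 * t) + (w \<bullet> (A *v w) - lam * (w \<bullet> w)) * t^2 \<le> 0" for t
      proof -
        have "v + t *\<^sub>R w \<in> V" using vV wV sV by (simp add: subspace_add subspace_scale)
        from bound[OF this]
        have "(v + t *\<^sub>R w) \<bullet> (A *v (v + t *\<^sub>R w)) \<le> lam * ((v + t *\<^sub>R w) \<bullet> (v + t *\<^sub>R w))" .
        moreover have "v \<bullet> (A *v w) = w \<bullet> (A *v v)"
          using sym_inner[OF sym, of v w] by (simp add: inner_commute)
        ultimately show ?thesis
          by (simp add: matrix_vector_right_distrib matrix_vector_mult_scaleR inner_add_left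
              inner_add_right nv lam_def[symmetric] inner_commute[of w v] algebra_simps power2_eq_square)
      qed
      then have "(w \<bullet> (A *v v) - lam * (v \<bullet> w)) * 2 = 0"
        using quad_zero[of "(w \<bullet> (A *v v) - lam * (v \<bullet> w)) * 2" "w \<bullet> (A *v w) - lam * (w \<bullet> w)"]
        by (simp add: mult_ac)
      then show ?thesis by (simp add: inner_diff_right inner_commute[of w v])
    qed
    have Av: "A *v v = lam *\<^sub>R v"
    proof -
      have "A *v v - lam *\<^sub>R v \<in> V" using inv vV sV by (simp add: subspace_diff subspace_scale)
      from orth[OF this] show ?thesis by simp
    qed
    define V' where "V' = {x \<in> V. v \<bullet> x = 0}"
    have sV': "subspace V'"
      using sV unfolding V'_def subspace_def by (auto simp: inner_add_right)
    have inv': "\<forall>x\<in>V'. A *v x \<in> V'"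
    proof
      fix x assume "x \<in> V'"
      then have "x \<in> V" "v \<bullet> x = 0" by (auto simp: V'_def)
      moreover have "v \<bullet> (A *v x) = (A *v v) \<bullet> x" using sym_inner[OF sym] by blast
      ultimately show "A *v x \<in> V'" using inv by (simp add: V'_def Av)
    qed
    have "v \<notin> V'" using nv by (simp add: V'_def)
    then have "V' \<subset> V" using vV unfolding V'_def by blast
    then have "dim V' < dim V"
      using dim_psubset[of V' V] span_eq_iff[of V'] span_eq_iff[of V] sV sV' by metis
    from less.hyps[OF this sV' inv'] obtain B' where
      B': "B' \<subseteq> V'" "finite B'" "\<forall>u\<in>B'. \<forall>w\<in>B'. u \<bullet> w = (if u = w then 1 else 0)"
          "span B' = V'" "\<forall>u\<in>B'. A *v u = (u \<bullet> (A *v u)) *\<^sub>R u" by blast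
    have vB': "v \<notin> B'" using B'(1) nv by (auto simp: V'_def)
    show ?thesis
    proof (intro exI[of _ "insert v B'"] conjI)
      show "insert v B' \<subseteq> V" using B'(1) vV by (auto simp: V'_def)
      show "finite (insert v B')" using B' by simp
      show "\<forall>u\<in>insert v B'. \<forall>w\<in>insert v B'. u \<bullet> w = (if u = w then 1 else 0)"
        using B'(1,3) vB' nv by (auto simp: V'_def inner_commute)
      show "\<forall>u\<in>insert v B'. A *v u = (u \<bullet> (A *v u)) *\<^sub>R u"
        using B'(5) Av nv by (simp add: lam_def)
      show "span (insert v B') = V"
      proof
        show "span (insert v B') \<subseteq> V"
          using \<open>insert v B' \<subseteq> V\<close> sV by (simp add: span_minimal)
        show "V \<subseteq> span (insert v B')"
        proof
          fix x assume xV: "x \<in> V"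
          have "x - (v \<bullet> x) *\<^sub>R v \<in> V'"
            using xV vV sV nv by (simp add: V'_def subspace_diff subspace_scale inner_diff_right)
          then have "x - (v \<bullet> x) *\<^sub>R v \<in> span (insert v B')"
            using B'(4) span_mono[of B' "insert v B'"] by auto
          moreover have "(v \<bullet> x) *\<^sub>R v \<in> span (insert v B')"
            by (simp add: span_base span_scale)
          ultimately have "x - (v \<bullet> x) *\<^sub>R v + (v \<bullet> x) *\<^sub>R v \<in> span (insert v B')"
            by (rule span_add)
          then show "x \<in> span (insert v B')" by simp
        qed
      qed
    qed
  qed
qed

lemma spectral:
  fixes A :: "real^'n^'n"
  assumes sym: "transpose A = A"
  shows "\<exists>B. onb B \<and> A = specsum B (\<lambda>u. u \<bullet> (A *v u))"
proof -
  obtain B where B: "finite B" "\<forall>u\<in>B. \<forall>w\<in>B. u \<bullet> w = (if u = w then 1 else 0)"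
      "span B = UNIV" "\<forall>u\<in>B. A *v u = (u \<bullet> (A *v u)) *\<^sub>R u"
    using spectral_sub[OF sym, of UNIV] by auto
  have onb: "onb B" using B by (simp add: onb_def)
  have "A = specsum B (\<lambda>u. u \<bullet> (A *v u))"
  proof (subst matrix_eq, intro allI)
    fix x
    have "A *v x = A *v (\<Sum>u\<in>B. (u \<bullet> x) *\<^sub>R u)" by (simp add: onb_expand[OF onb])
    also have "\<dots> = (\<Sum>u\<in>B. (u \<bullet> x) *\<^sub>R (A *v u))"
      by (simp add: mult_vec_sum matrix_vector_mult_scaleR)
    also have "\<dots> = (\<Sum>u\<in>B. ((u \<bullet> (A *v u)) * (u \<bullet> x)) *\<^sub>R u)"
    proof (rule sum.cong)
      fix u assume "u \<in> B"
      then have "A *v u = (u \<bullet> (A *v u)) *\<^sub>R u" using B(4) by blast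
      then show "(u \<bullet> x) *\<^sub>R (A *v u) = ((u \<bullet> (A *v u)) * (u \<bullet> x)) *\<^sub>R u"
        by (metis scaleR_scaleR mult.commute)
    qed simp
    also have "\<dots> = specsum B (\<lambda>u. u \<bullet> (A *v u)) *v x" by (simp add: specsum_vec)
    finally show "A *v x = specsum B (\<lambda>u. u \<bullet> (A *v u)) *v x" .
  qed
  with onb show ?thesis by blast
qed



definition alg :: "(real^'n^'n) set \<Rightarrow> bool" where
  "alg K \<longleftrightarrow> (\<forall>c A. A \<in> K \<longrightarrow> c *\<^sub>R A \<in> K) \<and> (\<forall>A B. A \<in> K \<longrightarrow> B \<in> K \<longrightarrow> A + B \<in> K) \<and>
     (\<forall>A B. A \<in> K \<longrightarrow> B \<in> K \<longrightarrow> A ** B \<in> K) \<and> mat 1 \<in> K"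

lemma alg_scale: "alg K \<Longrightarrow> A \<in> K \<Longrightarrow> c *\<^sub>R A \<in> K" by (simp add: alg_def)
lemma alg_add: "alg K \<Longrightarrow> A \<in> K \<Longrightarrow> B \<in> K \<Longrightarrow> A + B \<in> K" by (simp add: alg_def)
lemma alg_mult: "alg K \<Longrightarrow> A \<in> K \<Longrightarrow> B \<in> K \<Longrightarrow> A ** B \<in> K" by (simp add: alg_def)
lemma alg_one: "alg K \<Longrightarrow> mat 1 \<in> K" by (simp add: alg_def)
lemma alg_zero: "alg K \<Longrightarrow> 0 \<in> K" using alg_scale[of K "mat 1" 0] alg_one[of K] by simp
lemma alg_diff: "alg K \<Longrightarrow> A \<in> K \<Longrightarrow> B \<in> K \<Longrightarrow> A - B \<in> K"
  using alg_add[of K A "(-1) *\<^sub>R B"] alg_scale[of K B "-1"] by simp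

lemma alg_sum: "alg K \<Longrightarrow> (\<And>a. a \<in> S \<Longrightarrow> f a \<in> K) \<Longrightarrow> sum f S \<in> K"
  by (induction S rule: infinite_finite_induct) (auto simp: alg_zero alg_add)

lemma specsum_cong: "(\<And>u. u \<in> B \<Longrightarrow> g u = h u) \<Longrightarrow> specsum B g = specsum B h"
  unfolding specsum_def by (rule sum.cong) auto

lemma specsum_sum: "finite S \<Longrightarrow> (\<Sum>a\<in>S. specsum B (f a)) = specsum B (\<lambda>u. \<Sum>a\<in>S. f a u)"
  unfolding specsum_def by (simp add: scaleR_sum_left, subst sum.swap, simp)

lemma funcalc_poly:
  assumes K: "alg K" and B: "onb B" and A: "specsum B lam \<in> K" and S: "finite S"
  shows "specsum B (\<lambda>u. \<Prod>b\<in>S. (lam u - b)) \<in> K"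
  using S
proof (induction S rule: finite_induct)
  case empty
  then show ?case using specsum_one[OF B] alg_one[OF K] by simp
next
  case (insert b S)
  have "specsum B (\<lambda>u. \<Prod>b\<in>insert b S. (lam u - b)) =
        specsum B (\<lambda>u. (lam u - b) * (\<Prod>b\<in>S. (lam u - b)))"
    using insert by simp
  also have "\<dots> = specsum B (\<lambda>u. lam u - b) ** specsum B (\<lambda>u. \<Prod>b\<in>S. (lam u - b))"
    by (simp add: specsum_mult[OF B])
  also have "specsum B (\<lambda>u. lam u - b) = specsum B lam - b *\<^sub>R mat 1"
    using specsum_diff[of B lam "\<lambda>_. b"] specsum_const[OF B] by simp
  finally show ?case
    using insert.IH A K by (simp add: alg_mult alg_diff alg_scale alg_one)
qed

lemma funcalc_ind:
  assumes K: "alg K" and B: "onb B" and A: "specsum B lam \<in> K" and a: "a \<in> lam ` B"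
  shows "specsum B (\<lambda>u. if lam u = a then 1 else 0) \<in> K"
proof -
  have fin: "finite B" using B by (simp add: onb_def)
  define S where "S = lam ` B - {a}"
  have fS: "finite S" using fin by (simp add: S_def)
  define c where "c = (\<Prod>b\<in>S. (a - b))"
  have c0: "c \<noteq> 0" using fS by (simp add: c_def S_def)
  have "specsum B (\<lambda>u. \<Prod>b\<in>S. (lam u - b)) = specsum B (\<lambda>u. c * (if lam u = a then 1 else 0))"
  proof (rule specsum_cong)
    fix u assume u: "u \<in> B"
    show "(\<Prod>b\<in>S. (lam u - b)) = c * (if lam u = a then 1 else 0)"
    proof (cases "lam u = a")
      case True then show ?thesis by (simp add: c_def)
    next
      case False
      then have "lam u \<in> S" using u by (simp add: S_def)
      then show ?thesis using fS False by (simp add: prod_zero_iff)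
    qed
  qed
  also have "\<dots> = c *\<^sub>R specsum B (\<lambda>u. if lam u = a then 1 else 0)" by (rule specsum_scale)
  finally have "c *\<^sub>R specsum B (\<lambda>u. if lam u = a then 1 else 0) \<in> K"
    using funcalc_poly[OF K B A fS] by simp
  then have "(1/c) *\<^sub>R (c *\<^sub>R specsum B (\<lambda>u. if lam u = a then 1 else 0)) \<in> K"
    using K by (simp add: alg_scale del: scaleR_scaleR)
  then show ?thesis using c0 by simp
qed

lemma funcalc:
  assumes K: "alg K" and B: "onb B" and A: "specsum B lam \<in> K"
  shows "specsum B (\<lambda>u. g (lam u)) \<in> K"
proof -
  have fin: "finite B" using B by (simp add: onb_def)
  have "(\<Sum>a\<in>lam ` B. g a *\<^sub>R specsum B (\<lambda>u. if lam u = a then 1 else 0)) =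
        (\<Sum>a\<in>lam ` B. specsum B (\<lambda>u. g a * (if lam u = a then 1 else 0)))"
    by (simp add: specsum_scale)
  also have "\<dots> = specsum B (\<lambda>u. \<Sum>a\<in>lam ` B. g a * (if lam u = a then 1 else 0))"
    using fin by (simp add: specsum_sum)
  also have "\<dots> = specsum B (\<lambda>u. g (lam u))"
  proof (rule specsum_cong)
    fix u assume "u \<in> B"
    then have "lam u \<in> lam ` B" by simp
    have "(\<Sum>a\<in>lam ` B. g a * (if lam u = a then 1 else 0)) = (\<Sum>a\<in>lam ` B. if lam u = a then g a else 0)"
      by (rule sum.cong) auto
    also have "\<dots> = g (lam u)" using fin \<open>lam u \<in> lam ` B\<close> by (simp add: sum.delta')
    finally show "(\<Sum>a\<in>lam ` B. g a * (if lam u = a then 1 else 0)) = g (lam u)" .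
  qed
  finally have eq: "specsum B (\<lambda>u. g (lam u)) =
      (\<Sum>a\<in>lam ` B. g a *\<^sub>R specsum B (\<lambda>u. if lam u = a then 1 else 0))" by simp
  show ?thesis unfolding eq
    by (intro alg_sum[OF K] alg_scale[OF K] funcalc_ind[OF K B A]) auto
qed

lemma psd_decomp:
  assumes "psd A"
  obtains B lam where "onb B" "A = specsum B lam" "\<And>u. u \<in> B \<Longrightarrow> lam u \<ge> 0"
proof -
  from assms have "transpose A = A" by (simp add: psd_def)
  from spectral[OF this] obtain B where "onb B" "A = specsum B (\<lambda>u. u \<bullet> (A *v u))" by blast
  moreover have "\<And>u. u \<bullet> (A *v u) \<ge> 0" using assms by (simp add: psd_def)
  ultimately show ?thesis using that by blast
qed

lemma pd_decomp:
  assumes "pd A"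
  obtains B lam where "onb B" "A = specsum B lam" "\<And>u. u \<in> B \<Longrightarrow> lam u > 0"
proof -
  from assms have "transpose A = A" by (simp add: pd_def)
  from spectral[OF this] obtain B where B: "onb B" "A = specsum B (\<lambda>u. u \<bullet> (A *v u))" by blast
  moreover have "\<And>u. u \<in> B \<Longrightarrow> u \<bullet> (A *v u) > 0"
  proof -
    fix u assume "u \<in> B"
    then have "u \<bullet> u = 1" using B(1) by (auto simp: onb_def)
    then have "u \<noteq> 0" by auto
    then show "u \<bullet> (A *v u) > 0" using assms by (simp add: pd_def)
  qed
  ultimately show ?thesis using that by blast
qed

lemma specsum_psd: "(\<And>u. u \<in> B \<Longrightarrow> g u \<ge> 0) \<Longrightarrow> psd (specsum B g)"
  unfolding psd_def by (simp add: specsum_transpose specsum_quad sum_nonneg)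

lemma specsum_pd:
  assumes B: "onb B" and g: "\<And>u. u \<in> B \<Longrightarrow> g u > 0" shows "pd (specsum B g)"
  unfolding pd_def
proof (intro conjI allI impI)
  show "transpose (specsum B g) = specsum B g" by (rule specsum_transpose)
  fix v :: "real^'a" assume "v \<noteq> 0"
  then obtain u where u: "u \<in> B" "u \<bullet> v \<noteq> 0" using onb_nonzero_coeff[OF B] by blast
  have fin: "finite B" using B by (simp add: onb_def)
  have "0 < (\<Sum>u\<in>B. g u * (u \<bullet> v)^2)"
  proof (rule sum_pos2[OF fin u(1)])
    show "0 < g u * (u \<bullet> v)^2" using u g by simp
    show "\<And>i. i \<in> B \<Longrightarrow> 0 \<le> g i * (i \<bullet> v)^2" using g by (simp add: less_imp_le)
  qed
  then show "0 < v \<bullet> (specsum B g *v v)" by (simp add: specsum_quad)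
qed

lemma specsum_inv:
  assumes B: "onb B" and g: "\<And>u. u \<in> B \<Longrightarrow> g u \<noteq> 0"
  shows "matrix_inv (specsum B g) = specsum B (\<lambda>u. 1 / g u)"
proof (rule matrix_inv_eq)
  have "specsum B (\<lambda>u. g u * (1 / g u)) = specsum B (\<lambda>_. 1)"
    by (rule specsum_cong) (simp add: g)
  then show "specsum B g ** specsum B (\<lambda>u. 1 / g u) = mat 1"
    by (simp add: specsum_mult[OF B] specsum_one[OF B])
  have "specsum B (\<lambda>u. (1 / g u) * g u) = specsum B (\<lambda>_. 1)"
    by (rule specsum_cong) (simp add: g)
  then show "specsum B (\<lambda>u. 1 / g u) ** specsum B g = mat 1"
    by (simp add: specsum_mult[OF B] specsum_one[OF B])
qed

lemma trace_psd_mult: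
  assumes "psd G" "psd N" shows "0 \<le> trace (G ** N)"
proof -
  obtain B lam where B: "onb B" "G = specsum B lam" "\<And>u. u \<in> B \<Longrightarrow> lam u \<ge> 0"
    using psd_decomp[OF assms(1)] by blast
  have "\<And>u. 0 \<le> u \<bullet> (N *v u)" using assms(2) by (simp add: psd_def)
  then show ?thesis using B by (simp add: trace_specsum_mult sum_nonneg)
qed



lemma trace_zero[simp]: "trace (0::real^'n^'n) = 0" by (simp add: trace_def)

lemma pd_imp_psd: "pd A \<Longrightarrow> psd A"
  unfolding pd_def psd_def by (metis inner_zero_left order_refl less_imp_le)

lemma inv_in_K:
  assumes K: "alg K" and H: "H \<in> K" "pd H"
  shows "matrix_inv H \<in> K" "pd (matrix_inv H)" "H ** matrix_inv H = mat 1"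
        "matrix_inv H ** H = mat 1" "transpose (matrix_inv H) = matrix_inv H"
proof -
  obtain B lam where B: "onb B" "H = specsum B lam" "\<And>u. u \<in> B \<Longrightarrow> lam u > 0"
    using pd_decomp[OF H(2)] by blast
  have inv: "matrix_inv H = specsum B (\<lambda>u. 1 / lam u)"
    using specsum_inv[OF B(1), of lam] B(2,3) by force
  show "matrix_inv H \<in> K" unfolding inv
    using funcalc[OF K B(1), of lam "\<lambda>x. 1 / x"] H(1) B(2) by simp
  show "pd (matrix_inv H)" unfolding inv by (rule specsum_pd[OF B(1)]) (simp add: B(3))
  have "H ** matrix_inv H = specsum B lam ** specsum B (\<lambda>u. 1 / lam u)"
    by (subst inv) (simp only: B(2))
  also have "\<dots> = specsum B (\<lambda>u. lam u * (1 / lam u))" by (rule specsum_mult[OF B(1)])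
  also have "\<dots> = specsum B (\<lambda>_. 1)"
    by (rule specsum_cong) (simp add: B(3) less_imp_neq[symmetric])
  finally show "H ** matrix_inv H = mat 1" by (simp only: specsum_one[OF B(1)])
  have "matrix_inv H ** H = specsum B (\<lambda>u. 1 / lam u) ** specsum B lam"
    by (subst inv) (simp only: B(2))
  also have "\<dots> = specsum B (\<lambda>u. (1 / lam u) * lam u)" by (rule specsum_mult[OF B(1)])
  also have "\<dots> = specsum B (\<lambda>_. 1)"
    by (rule specsum_cong) (simp add: B(3) less_imp_neq[symmetric])
  finally show "matrix_inv H ** H = mat 1" by (simp only: specsum_one[OF B(1)])
  show "transpose (matrix_inv H) = matrix_inv H" by (simp add: inv specsum_transpose)
qed

lemma trace_SSG:
  assumes "transpose S = S" shows "(S ** S) \<bullet> G = trace (S ** S ** G)"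
  using assms by (simp add: trace_mult_inner matrix_transpose_mul)

lemma value_identity:
  fixes S H G :: "real^'n^'n"
  assumes S: "transpose S = S" and HG: "H ** G = mat 1" "G ** H = mat 1"
      and MG: "M \<bullet> G = (S ** S) \<bullet> G"
  shows "frob M G + trace H = trace ((S - H) ** G ** (S - H)) + 2 * trace S"
proof -
  have "(S - H) ** G ** (S - H) = (S ** G - mat 1) ** (S - H)"
    by (simp add: matrix_sub_rdistrib HG)
  also have "\<dots> = S ** G ** S - S ** (G ** H) - S + H"
    by (simp add: matrix_sub_rdistrib matrix_sub_ldistrib matrix_mul_assoc)
  also have "\<dots> = S ** G ** S - S - S + H" by (simp add: HG)
  finally have e0: "(S - H) ** G ** (S - H) = S ** G ** S - S - S + H" .
  have e: "trace ((S - H) ** G ** (S - H)) = trace (S ** G ** S) - 2 * trace S + trace H"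
    unfolding e0 by (simp only: trace_sub trace_add)
  have "trace (S ** G ** S) = trace (S ** S ** G)"
    using trace_mul_sym[of "S ** G" S] by (simp add: matrix_mul_assoc)
  moreover have "frob M G = trace (S ** S ** G)"
    using MG trace_SSG[OF S] by (simp add: frob_inner)
  ultimately show ?thesis using e by simp
qed

lemma dgd:
  fixes D G :: "real^'n^'n"
  assumes G: "pd G" and D: "transpose D = D"
  shows "0 \<le> trace (D ** G ** D)" "trace (D ** G ** D) = 0 \<Longrightarrow> D = 0"
proof -
  obtain B g where B: "onb B" "G = specsum B g" "\<And>u. u \<in> B \<Longrightarrow> g u > 0"
    using pd_decomp[OF G] by blast
  have fin: "finite B" using B(1) by (simp add: onb_def)
  have "trace (D ** G ** D) = trace (G ** (D ** D))"
    using trace_mul_sym[of "D ** G" D] trace_mul_sym[of "D ** D" G] by (simp add: matrix_mul_assoc)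
  also have "\<dots> = (\<Sum>u\<in>B. g u * ((D *v u) \<bullet> (D *v u)))"
    unfolding B(2) trace_specsum_mult
    by (rule sum.cong) (simp_all add: matrix_vector_mul_assoc[symmetric] sym_inner[OF D])
  finally have tr: "trace (D ** G ** D) = (\<Sum>u\<in>B. g u * ((D *v u) \<bullet> (D *v u)))" .
  have nn: "\<And>u. u \<in> B \<Longrightarrow> 0 \<le> g u * ((D *v u) \<bullet> (D *v u))"
    using B(3) by (simp add: less_imp_le)
  show "0 \<le> trace (D ** G ** D)" unfolding tr by (rule sum_nonneg) (rule nn)
  assume "trace (D ** G ** D) = 0"
  then have "\<forall>u\<in>B. g u * ((D *v u) \<bullet> (D *v u)) = 0"
    using sum_nonneg_eq_0_iff[OF fin, of "\<lambda>u. g u * ((D *v u) \<bullet> (D *v u))"] nn tr by simp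
  then have "\<And>u. u \<in> B \<Longrightarrow> D *v u = 0" using B(3) by fastforce
  then show "D = 0" by (rule onb_eq0[OF B(1)])
qed

lemma charac:
  assumes K: "alg K" and Hs: "Hs = {A. psd A} \<inter> K"
      and S: "S \<in> K" "pd S"
      and eq: "\<And>Y. Y \<in> K \<Longrightarrow> transpose Y = Y \<Longrightarrow> M \<bullet> Y = (S ** S) \<bullet> Y"
  shows "precond_pd Hs M = S"
proof -
  have St: "transpose S = S" using S(2) by (simp add: pd_def)
  have val: "frob M (matrix_inv H) + trace H = trace ((S - H) ** matrix_inv H ** (S - H)) + 2 * trace S"
    and nn: "0 \<le> trace ((S - H) ** matrix_inv H ** (S - H))"
    and z: "trace ((S - H) ** matrix_inv H ** (S - H)) = 0 \<Longrightarrow> S - H = 0"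
    if H: "H \<in> K" "pd H" for H
  proof -
    have Ht: "transpose H = H" using H(2) by (simp add: pd_def)
    note I = inv_in_K[OF K H]
    show "frob M (matrix_inv H) + trace H = trace ((S - H) ** matrix_inv H ** (S - H)) + 2 * trace S"
      by (rule value_identity[OF St I(3,4) eq[OF I(1,5)]])
    have Dt: "transpose (S - H) = S - H" using St Ht by (simp add: transpose_diff)
    show "0 \<le> trace ((S - H) ** matrix_inv H ** (S - H))" by (rule dgd(1)[OF I(2) Dt])
    show "trace ((S - H) ** matrix_inv H ** (S - H)) = 0 \<Longrightarrow> S - H = 0" by (rule dgd(2)[OF I(2) Dt])
  qed
  have vS: "frob M (matrix_inv S) + trace S = 2 * trace S"
    using val[OF S] by simp
  show ?thesis unfolding precond_pd_def
  proof (rule the_equality)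
    show "S \<in> Hs \<and> pd S \<and> (\<forall>H'\<in>Hs. pd H' \<longrightarrow>
        frob M (matrix_inv S) + trace S \<le> frob M (matrix_inv H') + trace H')"
    proof (intro conjI ballI impI)
      show "S \<in> Hs" using S Hs pd_imp_psd by auto
      show "pd S" by (rule S(2))
      fix H' assume "H' \<in> Hs" "pd H'"
      then have "H' \<in> K" using Hs by auto
      from val[OF this \<open>pd H'\<close>] nn[OF this \<open>pd H'\<close>] vS
      show "frob M (matrix_inv S) + trace S \<le> frob M (matrix_inv H') + trace H'" by linarith
    qed
  next
    fix H assume P: "H \<in> Hs \<and> pd H \<and> (\<forall>H'\<in>Hs. pd H' \<longrightarrow>
        frob M (matrix_inv H) + trace H \<le> frob M (matrix_inv H') + trace H')"
    have SHs: "S \<in> Hs" using S Hs pd_imp_psd by auto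
    have HK: "H \<in> K" using P Hs by auto
    have "frob M (matrix_inv H) + trace H \<le> 2 * trace S" using P SHs S(2) vS by auto
    then have "trace ((S - H) ** matrix_inv H ** (S - H)) = 0"
      using val[OF HK] nn[OF HK] P by auto
    then show "H = S" using z[OF HK] P by auto
  qed
qed

lemma proj_exists:
  fixes Sig :: "real^'n^'n"
  assumes K: "alg K"
  shows "\<exists>Q. Q \<in> K \<and> transpose Q = Q \<and> (\<forall>Y. Y \<in> K \<longrightarrow> transpose Y = Y \<longrightarrow> Sig \<bullet> Y = Q \<bullet> Y)"
proof -
  define Ks where "Ks = {A \<in> K. transpose A = A}"
  have sK: "subspace Ks"
    unfolding subspace_def Ks_def
    using K by (auto simp: alg_zero alg_add alg_scale transpose_add transpose_scalar)
       (simp add: transpose_def vec_eq_iff)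
  obtain y z where yz: "y \<in> span Ks" "\<And>w. w \<in> span Ks \<Longrightarrow> orthogonal z w" "Sig = y + z"
    using orthogonal_subspace_decomp_exists[of Ks Sig] by blast
  have sp: "span Ks = Ks" using sK by (simp add: span_eq_iff)
  show ?thesis
  proof (intro exI[of _ y] conjI allI impI)
    have "y \<in> Ks" using yz(1) sp by simp
    then show "y \<in> K" "transpose y = y" by (auto simp: Ks_def)
    fix Y assume "Y \<in> K" "transpose Y = Y"
    then have "Y \<in> Ks" by (simp add: Ks_def)
    then have "Y \<in> span Ks" by (rule span_base)
    then have "orthogonal z Y" using yz(2) by blast
    then show "Sig \<bullet> Y = y \<bullet> Y" using yz(3) by (simp add: inner_add_left orthogonal_def)
  qed
qed



lemma proj_decomp:
  fixes Sig Q :: "real^'n^'n"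
  assumes K: "alg K" and Q: "Q \<in> K" "transpose Q = Q"
      and eq: "\<And>Y. Y \<in> K \<Longrightarrow> transpose Y = Y \<Longrightarrow> Sig \<bullet> Y = Q \<bullet> Y"
      and Sig: "psd Sig"
  obtains B lam where "onb B" "Q = specsum B lam" "\<And>u. u \<in> B \<Longrightarrow> lam u \<ge> 0"
     "pd Sig \<Longrightarrow> (\<And>u. u \<in> B \<Longrightarrow> lam u > 0)"
proof -
  obtain B where B: "onb B" "Q = specsum B (\<lambda>u. u \<bullet> (Q *v u))" using spectral[OF Q(2)] by blast
  define lam where "lam u = u \<bullet> (Q *v u)" for u
  have QB: "Q = specsum B lam" using B(2) by (simp add: lam_def[abs_def])
  have fin: "finite B" using B(1) by (simp add: onb_def)
  have key: "(\<Sum>u\<in>B. lam u * (if P (lam u) then 1 else 0)) =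
             (\<Sum>u\<in>B. (if P (lam u) then 1 else 0) * (u \<bullet> (Sig *v u)))" for P
  proof -
    define E where "E = specsum B (\<lambda>u. if P (lam u) then 1 else 0)"
    have EK: "E \<in> K" unfolding E_def
      using funcalc[OF K B(1), of lam "\<lambda>x. if P x then 1 else 0"] Q(1) QB by simp
    have Et: "transpose E = E" by (simp add: E_def specsum_transpose)
    have "Q \<bullet> E = trace (Q ** E)" using Q(2) by (simp add: trace_mult_inner)
    also have "\<dots> = (\<Sum>u\<in>B. lam u * (if P (lam u) then 1 else 0))"
      unfolding QB E_def specsum_mult[OF B(1)] trace_specsum[OF B(1)] ..
    finally have 1: "Q \<bullet> E = (\<Sum>u\<in>B. lam u * (if P (lam u) then 1 else 0))" .
    have "Sig \<bullet> E = trace (E ** Sig)" using Et by (simp add: trace_mult_inner inner_commute)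
    also have "\<dots> = (\<Sum>u\<in>B. (if P (lam u) then 1 else 0) * (u \<bullet> (Sig *v u)))"
      unfolding E_def trace_specsum_mult ..
    finally have 2: "Sig \<bullet> E = (\<Sum>u\<in>B. (if P (lam u) then 1 else 0) * (u \<bullet> (Sig *v u)))" .
    show ?thesis using 1 2 eq[OF EK Et] by simp
  qed
  have SigN: "\<And>u. 0 \<le> u \<bullet> (Sig *v u)" using Sig by (simp add: psd_def)
  have nonneg: "lam u \<ge> 0" if u: "u \<in> B" for u
  proof (rule ccontr)
    assume "\<not> lam u \<ge> 0"
    then have neg: "lam u < 0" by simp
    have "0 < (\<Sum>u\<in>B. - (lam u * (if lam u < 0 then 1 else 0)))"
      by (rule sum_pos2[OF fin u]) (auto simp: neg)
    moreover have "0 \<le> (\<Sum>u\<in>B. (if lam u < 0 then 1 else 0) * (u \<bullet> (Sig *v u)))"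
      by (rule sum_nonneg) (simp add: SigN)
    ultimately show False using key[of "\<lambda>x. x < 0"] by (simp add: sum_negf)
  qed
  have pos: "lam u > 0" if pd: "pd Sig" and u: "u \<in> B" for u
  proof (rule ccontr)
    assume "\<not> lam u > 0"
    then have np: "lam u \<le> 0" by simp
    have "u \<bullet> u = 1" using u B(1) by (auto simp: onb_def)
    then have "u \<noteq> 0" by auto
    then have "u \<bullet> (Sig *v u) > 0" using pd by (simp add: pd_def)
    then have "0 < (\<Sum>u\<in>B. (if lam u \<le> 0 then 1 else 0) * (u \<bullet> (Sig *v u)))"
      by (intro sum_pos2[OF fin u]) (auto simp: np SigN)
    moreover have "(\<Sum>u\<in>B. lam u * (if lam u \<le> 0 then 1 else 0)) \<le> 0"
      by (rule sum_nonpos) simp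
    ultimately show False using key[of "\<lambda>x. x \<le> 0"] by simp
  qed
  show ?thesis using that[OF B(1) QB nonneg pos] by blast
qed

lemma sqrt_props:
  fixes lam :: "real^'n \<Rightarrow> real"
  assumes B: "onb B" and lam: "\<And>u. u \<in> B \<Longrightarrow> lam u \<ge> 0" and d: "d \<ge> 0"
  shows "specsum B (\<lambda>u. sqrt (lam u + d)) ** specsum B (\<lambda>u. sqrt (lam u + d)) =
           specsum B lam + d *\<^sub>R mat 1"
    and "trace (specsum B (\<lambda>u. sqrt (lam u + d))) = (\<Sum>u\<in>B. sqrt (lam u + d))"
    and "alg K \<Longrightarrow> specsum B lam \<in> K \<Longrightarrow> specsum B (\<lambda>u. sqrt (lam u + d)) \<in> K"
    and "(\<And>u. u \<in> B \<Longrightarrow> lam u + d > 0) \<Longrightarrow> pd (specsum B (\<lambda>u. sqrt (lam u + d)))"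
proof -
  have "specsum B (\<lambda>u. sqrt (lam u + d)) ** specsum B (\<lambda>u. sqrt (lam u + d)) =
        specsum B (\<lambda>u. sqrt (lam u + d) * sqrt (lam u + d))" by (rule specsum_mult[OF B])
  also have "\<dots> = specsum B (\<lambda>u. lam u + d)"
    by (rule specsum_cong) (simp add: lam d add_nonneg_nonneg)
  also have "\<dots> = specsum B lam + d *\<^sub>R mat 1"
    by (simp add: specsum_add specsum_const[OF B])
  finally show "specsum B (\<lambda>u. sqrt (lam u + d)) ** specsum B (\<lambda>u. sqrt (lam u + d)) =
           specsum B lam + d *\<^sub>R mat 1" .
  show "trace (specsum B (\<lambda>u. sqrt (lam u + d))) = (\<Sum>u\<in>B. sqrt (lam u + d))"
    by (rule trace_specsum[OF B])
  show "alg K \<Longrightarrow> specsum B lam \<in> K \<Longrightarrow> specsum B (\<lambda>u. sqrt (lam u + d)) \<in> K"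
    using funcalc[OF _ B, of K lam "\<lambda>x. sqrt (x + d)"] by simp
  show "(\<And>u. u \<in> B \<Longrightarrow> lam u + d > 0) \<Longrightarrow> pd (specsum B (\<lambda>u. sqrt (lam u + d)))"
    by (rule specsum_pd[OF B]) simp
qed



lemma diag_quad: "(A::real^'n^'n)$i$i = axis i 1 \<bullet> (A *v axis i 1)"
proof -
  have "axis i 1 \<bullet> (A *v axis i 1) = (A *v axis i 1) $ i" by (simp only: inner_axis') simp
  also have "\<dots> = A$i$i" by (simp add: matrix_vector_mult_basis column_def)
  finally show ?thesis by simp
qed

lemma pd_trace_pos: "pd (A::real^'n^'n) \<Longrightarrow> trace A > 0"
  unfolding trace_def
  by (rule sum_pos) (auto simp: diag_quad pd_def axis_eq_0_iff)

lemma scaleR_mult_mat: "(a *\<^sub>R (A::real^'n^'n)) ** (b *\<^sub>R B) = (a * b) *\<^sub>R (A ** B)"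
  by (simp add: matrix_matrix_mult_def vec_eq_iff sum_distrib_left mult_ac)

lemma outer_neg: "outer (- a) (- b) = outer a b"
  by (simp add: outer_def)

lemma sigma_bound:
  fixes Hs :: "(real^'n^'n) set" and f :: "real^'n \<Rightarrow> real" and M :: "'w measure"
    and F :: "'t \<Rightarrow> 'w \<Rightarrow> real^'n \<Rightarrow> real" and N S :: "real^'n^'n"
  assumes K: "alg K" and Hs: "Hs = {A. psd A} \<inter> K" and S: "S \<in> K" "pd S"
    and eqN: "\<And>Y. Y \<in> K \<Longrightarrow> transpose Y = Y \<Longrightarrow> N \<bullet> Y = (S ** S) \<bullet> Y"
    and unbiased: "\<And>t x. (\<integral>\<omega>. grad (F t \<omega>) x \<partial>M) = grad f x"
    and cov_int: "\<And>t x. integrable M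
          (\<lambda>\<omega>. outer (grad f x - grad (F t \<omega>) x) (grad f x - grad (F t \<omega>) x))"
    and cov: "\<And>t x. psd (N - (\<integral>\<omega>. outer (grad f x - grad (F t \<omega>) x) (grad f x - grad (F t \<omega>) x) \<partial>M))"
  shows "adaptive_std Hs M F \<le> ennreal (trace S)"
proof -
  define T where "T = trace S"
  have T0: "T > 0" unfolding T_def by (rule pd_trace_pos[OF S(2)])
  define H0 where "H0 = (1/T) *\<^sub>R S"
  have St: "transpose S = S" using S(2) by (simp add: pd_def)
  have H0pd: "pd H0" using S(2) T0
    by (simp add: H0_def pd_def transpose_scalar scaleR_mult_vec)
  have H0Hs: "H0 \<in> Hs" using H0pd S(1) K Hs by (simp add: pd_imp_psd H0_def alg_scale)
  have trH0: "trace H0 \<le> 1" using T0 by (simp add: H0_def trace_scaleR T_def)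
  define G where "G = matrix_inv S"
  note I = inv_in_K[OF K S, folded G_def]
  have invH0: "matrix_inv H0 = T *\<^sub>R G"
  proof (rule matrix_inv_eq)
    show "H0 ** (T *\<^sub>R G) = mat 1" using T0 by (simp add: H0_def scaleR_mult_mat I(3))
    show "(T *\<^sub>R G) ** H0 = mat 1" using T0 by (simp add: H0_def scaleR_mult_mat I(4))
  qed
  have GN: "G \<bullet> N = T"
  proof -
    have "G \<bullet> N = (S ** S) \<bullet> G" using eqN[OF I(1) I(5)] by (simp add: inner_commute)
    also have "\<dots> = trace (S ** (S ** G))" using trace_SSG[OF St] by (simp add: matrix_mul_assoc)
    finally show ?thesis by (simp add: I(3) T_def)
  qed
  have bound: "(\<integral>\<^sup>+ \<omega>. ennreal (let v = grad (F t \<omega>) x - (\<integral>\<omega>'. grad (F t \<omega>') x \<partial>M)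
              in v \<bullet> (matrix_inv H0 *v v)) \<partial>M) \<le> ennreal (T * T)" for t x
  proof -
    define w where "w \<omega> = grad f x - grad (F t \<omega>) x" for \<omega>
    define C where "C = (\<integral>\<omega>. outer (w \<omega>) (w \<omega>) \<partial>M)"
    have pt: "(let v = grad (F t \<omega>) x - (\<integral>\<omega>'. grad (F t \<omega>') x \<partial>M) in v \<bullet> (matrix_inv H0 *v v))
            = T * (G \<bullet> outer (w \<omega>) (w \<omega>))" for \<omega>
    proof -
      have "grad (F t \<omega>) x - (\<integral>\<omega>'. grad (F t \<omega>') x \<partial>M) = - w \<omega>"
        by (simp add: unbiased w_def)
      then show ?thesis
        by (simp add: invH0 scaleR_mult_vec inner_outer[symmetric] outer_neg)
    qed
    have intw: "integrable M (\<lambda>\<omega>. outer (w \<omega>) (w \<omega>))" using cov_int by (simp add: w_def)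
    have inth: "integrable M (\<lambda>\<omega>. T * (G \<bullet> outer (w \<omega>) (w \<omega>)))"
      using intw by (intro integrable_mult_right integrable_inner_right)
    have nn: "0 \<le> T * (G \<bullet> outer (w \<omega>) (w \<omega>))" for \<omega>
      using T0 pd_imp_psd[OF I(2)] by (simp add: inner_outer psd_def)
    have "(\<integral>\<^sup>+ \<omega>. ennreal (let v = grad (F t \<omega>) x - (\<integral>\<omega>'. grad (F t \<omega>') x \<partial>M)
              in v \<bullet> (matrix_inv H0 *v v)) \<partial>M) = (\<integral>\<^sup>+ \<omega>. ennreal (T * (G \<bullet> outer (w \<omega>) (w \<omega>))) \<partial>M)"
      by (simp only: pt)
    also have "\<dots> = ennreal (\<integral>\<omega>. T * (G \<bullet> outer (w \<omega>) (w \<omega>)) \<partial>M)"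
      by (rule nn_integral_eq_integral[OF inth]) (simp add: nn)
    also have "(\<integral>\<omega>. T * (G \<bullet> outer (w \<omega>) (w \<omega>)) \<partial>M) = T * (G \<bullet> C)"
      using intw by (simp add: C_def)
    also have "G \<bullet> C \<le> T"
    proof -
      have "0 \<le> trace (G ** (N - C))"
        by (rule trace_psd_mult[OF pd_imp_psd[OF I(2)]]) (use cov in \<open>simp add: C_def w_def\<close>)
      also have "trace (G ** (N - C)) = G \<bullet> N - G \<bullet> C"
        by (simp add: trace_mult_inner I(5) inner_diff_right)
      finally show ?thesis using GN by simp
    qed
    then have "T * (G \<bullet> C) \<le> T * T" using T0 by (simp add: mult_left_mono)
    finally show ?thesis by (simp add: ennreal_leI)
  qed
  have vs: "adaptive_var_sq Hs M F \<le> ennreal (T * T)"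
    unfolding adaptive_var_sq_def
    by (rule INF_lower2[of H0]) (use H0Hs H0pd trH0 bound in \<open>auto intro!: SUP_least\<close>)
  have "adaptive_var_sq Hs M F < top" using vs ennreal_less_top by (rule le_less_trans)
  then have nt: "adaptive_var_sq Hs M F \<noteq> \<infinity>" by (simp add: infinity_ennreal_def)
  have "enn2real (adaptive_var_sq Hs M F) \<le> T * T"
    using enn2real_mono[OF vs] T0 by simp
  then have "sqrt (enn2real (adaptive_var_sq Hs M F)) \<le> T"
    using T0 real_sqrt_le_mono[of _ "T * T"] by (simp add: real_sqrt_mult_self)
  then show ?thesis using nt unfolding adaptive_std_def T_def[symmetric] by (simp add: ennreal_leI)
qed



lemma psd_add: "psd A \<Longrightarrow> psd B \<Longrightarrow> psd (A + B)"
  unfolding psd_def by (simp add: transpose_add matrix_vector_mult_add_rdistrib inner_add_right add_nonneg_nonneg)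

lemma psd_scaleI: "d \<ge> 0 \<Longrightarrow> psd (d *\<^sub>R (mat 1 :: real^'n^'n))"
  unfolding psd_def by (simp add: transpose_scalar scaleR_mult_vec)

theorem propositionA9:
  fixes Hs :: "(real^'n^'n) set"
    and f :: "real^'n \<Rightarrow> real"
    and M :: "'w measure"
    and F :: "'t \<Rightarrow> 'w \<Rightarrow> real^'n \<Rightarrow> real"
    and \<Sigma> :: "real^'n^'n"
  assumes ws: "well_structured Hs"
    and P: "prob_space M"
    and f_diff: "\<And>x. f differentiable (at x)"
    and F_diff: "\<And>t \<omega> x. \<omega> \<in> space M \<Longrightarrow> F t \<omega> differentiable (at x)"
    and grad_int: "\<And>t x. integrable M (\<lambda>\<omega>. grad (F t \<omega>) x)"
    and unbiased: "\<And>t x. (\<integral>\<omega>. grad (F t \<omega>) x \<partial>M) = grad f x"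
    and cov_int: "\<And>t x. integrable M
          (\<lambda>\<omega>. outer (grad f x - grad (F t \<omega>) x) (grad f x - grad (F t \<omega>) x))"
    and Sigma_psd: "psd \<Sigma>"
    and cov_bound: "\<And>t x. loewner_le
          (\<integral>\<omega>. outer (grad f x - grad (F t \<omega>) x) (grad f x - grad (F t \<omega>) x) \<partial>M) \<Sigma>"
  shows "adaptive_std Hs M F \<le> ennreal (trace (precond Hs \<Sigma>))"
proof -
  obtain K where K: "alg K" and Hs: "Hs = {A. psd A} \<inter> K"
    using ws unfolding well_structured_def alg_def by blast
  obtain Q where Q: "Q \<in> K" "transpose Q = Q"
      and eqQ: "\<And>Y. Y \<in> K \<Longrightarrow> transpose Y = Y \<Longrightarrow> \<Sigma> \<bullet> Y = Q \<bullet> Y"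
    using proj_exists[OF K, of \<Sigma>] by blast
  have "\<exists>B lam. onb B \<and> Q = specsum B lam \<and> (\<forall>u\<in>B. lam u \<ge> 0) \<and> (pd \<Sigma> \<longrightarrow> (\<forall>u\<in>B. lam u > 0))"
  proof (rule proj_decomp[OF K Q eqQ Sigma_psd])
    fix B lam assume "onb B" "Q = specsum B lam" "\<And>u. u \<in> B \<Longrightarrow> lam u \<ge> 0"
      "pd \<Sigma> \<Longrightarrow> (\<And>u. u \<in> B \<Longrightarrow> lam u > 0)"
    then show ?thesis by blast
  qed
  then obtain B lam where B: "onb B" "Q = specsum B lam" and lam0': "\<forall>u\<in>B. lam u \<ge> 0"
      and lampos': "pd \<Sigma> \<longrightarrow> (\<forall>u\<in>B. lam u > 0)"
    by blast
  have lam0: "\<And>u. u \<in> B \<Longrightarrow> lam u \<ge> 0" using lam0' by blast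
  have lampos: "\<And>u. pd \<Sigma> \<Longrightarrow> u \<in> B \<Longrightarrow> lam u > 0" using lampos' by blast
  define Sd where "Sd d = specsum B (\<lambda>u. sqrt (lam u + d))" for d
  have SdK: "Sd d \<in> K" if "d \<ge> 0" for d
    unfolding Sd_def using sqrt_props(3)[OF B(1) lam0 that K] Q(1) B(2) by simp
  have eqd: "(\<Sigma> + d *\<^sub>R mat 1) \<bullet> Y = (Sd d ** Sd d) \<bullet> Y"
    if "d \<ge> 0" "Y \<in> K" "transpose Y = Y" for d Y
  proof -
    have "Sd d ** Sd d = Q + d *\<^sub>R mat 1"
      unfolding Sd_def using sqrt_props(1)[OF B(1) lam0 that(1)] B(2) by simp
    then show ?thesis using eqQ[OF that(2,3)] by (simp add: inner_add_left)
  qed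
  have pdd: "pd (Sd d)" if "d > 0" for d
    unfolding Sd_def
    by (rule sqrt_props(4)[OF B(1) lam0]) (use that lam0 in \<open>auto intro: add_nonneg_pos\<close>)
  have prec_d: "precond_pd Hs (\<Sigma> + d *\<^sub>R mat 1) = Sd d" if "d > 0" for d
  proof -
    have d0: "d \<ge> 0" using that by simp
    show ?thesis
      by (rule charac[OF K Hs SdK[OF d0] pdd[OF that]]) (rule eqd[OF d0])
  qed
  have bound_d: "adaptive_std Hs M F \<le> ennreal (trace (Sd d))" if d: "d > 0" for d
  proof -
    have d0: "d \<ge> 0" using d by simp
    show ?thesis
    proof (rule sigma_bound[where N = "\<Sigma> + d *\<^sub>R mat 1", OF K Hs SdK[OF d0] pdd[OF d]])
      show "(\<Sigma> + d *\<^sub>R mat 1) \<bullet> Y = (Sd d ** Sd d) \<bullet> Y" if "Y \<in> K" "transpose Y = Y" for Y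
        by (rule eqd[OF d0 that])
      show "(\<integral>\<omega>. grad (F t \<omega>) x \<partial>M) = grad f x" for t x by (rule unbiased)
      show "integrable M (\<lambda>\<omega>. outer (grad f x - grad (F t \<omega>) x) (grad f x - grad (F t \<omega>) x))"
        for t x by (rule cov_int)
      fix t x
      let ?C = "\<integral>\<omega>. outer (grad f x - grad (F t \<omega>) x) (grad f x - grad (F t \<omega>) x) \<partial>M"
      have "psd (\<Sigma> - ?C)" using cov_bound[of x t] by (simp add: loewner_le_def)
      moreover have "psd (d *\<^sub>R (mat 1 :: real^'n^'n))" using d0 by (rule psd_scaleI)
      ultimately have "psd ((\<Sigma> - ?C) + d *\<^sub>R mat 1)" by (rule psd_add)
      then show "psd (\<Sigma> + d *\<^sub>R mat 1 - ?C)" by (simp add: algebra_simps)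
    qed
  qed
  have su: "((\<lambda>d. sqrt (lam u + d)) \<longlongrightarrow> sqrt (lam u + 0)) (at_right 0)" for u
    by (intro tendsto_real_sqrt tendsto_add tendsto_const) (rule tendsto_ident_at)
  have lim: "((\<lambda>d. Sd d) \<longlongrightarrow> Sd 0) (at_right 0)"
    unfolding Sd_def specsum_def
    by (rule tendsto_sum, rule tendsto_scaleR[OF su tendsto_const])
  have prec0: "precond Hs \<Sigma> = Sd 0"
  proof (cases "pd \<Sigma>")
    case True
    have "pd (Sd 0)" unfolding Sd_def
      by (rule sqrt_props(4)[OF B(1) lam0]) (use lampos[OF True] in auto)
    moreover have "\<Sigma> \<bullet> Y = (Sd 0 ** Sd 0) \<bullet> Y" if "Y \<in> K" "transpose Y = Y" for Y
      using eqd[of 0 Y] that by simp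
    ultimately have "precond_pd Hs \<Sigma> = Sd 0"
      using charac[OF K Hs SdK[of 0]] by simp
    then show ?thesis using True by (simp add: precond_def)
  next
    case False
    have ev: "eventually (\<lambda>d. Sd d = precond_pd Hs (\<Sigma> + d *\<^sub>R mat 1)) (at_right (0::real))"
      using eventually_at_right_less[of "0::real"] by eventually_elim (simp add: prec_d)
    have "((\<lambda>d. precond_pd Hs (\<Sigma> + d *\<^sub>R mat 1)) \<longlongrightarrow> Sd 0) (at_right 0)"
      using lim tendsto_cong[OF ev] by simp
    then show ?thesis using False by (simp add: precond_def tendsto_Lim)
  qed
  have trS: "trace (Sd d) = (\<Sum>u\<in>B. sqrt (lam u + d))" for d
    unfolding Sd_def by (rule trace_specsum[OF B(1)])
  have "((\<lambda>d. \<Sum>u\<in>B. sqrt (lam u + d)) \<longlongrightarrow> (\<Sum>u\<in>B. sqrt (lam u + 0))) (at_right 0)"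
    by (rule tendsto_sum, rule su)
  then have trlim: "((\<lambda>d. ennreal (trace (Sd d))) \<longlongrightarrow> ennreal (trace (Sd 0))) (at_right 0)"
    unfolding trS by (rule tendsto_ennrealI)
  have "adaptive_std Hs M F \<le> ennreal (trace (Sd 0))"
  proof (rule tendsto_le[OF trivial_limit_at_right_real trlim tendsto_const])
    show "\<forall>\<^sub>F d in at_right 0. adaptive_std Hs M F \<le> ennreal (trace (Sd d))"
      using eventually_at_right_less[of "0::real"] by eventually_elim (rule bound_d)
  qed
  then show ?thesis using prec0 by simp
qed


end
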